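(* Let $\Theta\subseteq\mathbb{R}$ be the parameter space, let $\mathbf U$ be a random variable with values in a space $\mathbb M$ whose distribution does not depend on $\theta$, and let $S$ be a real-valued statistic generated by the data generating equation $S=G_S(\mathbf U,\theta)$, where $G_S:\mathbb M\times\Theta\to\mathbb{R}$ is deterministic. Write $F_S(s,\theta)=P_\theta(S\le s)$ for the distribution function of $S$, $Q_s(\mathbf u)=\{\theta\in\Theta: s=G_S(\mathbf u,\theta)\}$ for the inverse image, and let $\mathbf U^\star$ be an independent copy of $\mathbf U$. Assume 1) for every $\mathbf u$, the function $\theta\mapsto G_S(\mathbf u,\theta)$ is non-decreasing; and 2) for every $\mathbf u$ and every $s$, $Q_s(\mathbf u)\neq\emptyset$. Then each $Q_s(\mathbf u)$ is an interval with endpoints $Q_s^-(\mathbf u)\le Q_s^+(\mathbf u)$, and for any $s_0$ and $\theta_0$, $$P\big(Q^+_{s_0}(\mathbf U^\star)\le\theta_0\big)=1-\lim_{\epsilon\downarrow0}F_S(s_0,\theta_0+\epsilon),\qquad P\big(Q^-_{s_0}(\mathbf U^\star)\le\theta_0\big)=1-\lim_{\epsilon\downarrow0}F_S(s_0-\epsilon,\theta_0).$$ If additionally 3) for all $\theta_0$ and $s_0$, $P_{\theta_0}(S=s_0)=F_S(s_0,\theta_0)-\lim_{\epsilon\downarrow0}F_S(s_0-\epsilon,\theta_0)=0$, then $F_S(s,\theta)$ is continuous as a function of $\theta$, $Q^+_{s_0}(\mathbf U^\star)=Q^-_{s_0}(\mathbf U^\star)$ with probability $1$, and $$P\big(Q_{s_0}(\mathbf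 U^\star)\le\theta_0\big)=1-F_S(s_0,\theta_0).$$
   Context: In the generalized fiducial framework, the generalized fiducial distribution (GFD) of $\theta$ given an observed value $s$ is the conditional distribution of $Q_s(\mathbf U^\star)$ given $Q_s(\mathbf U^\star)\neq\emptyset$; under assumption 2) this is simply the distribution of $Q_s(\mathbf U^\star)$. Under assumption 3), $Q_{s_0}(\mathbf U^\star)$ denotes the common value $Q^+_{s_0}(\mathbf U^\star)=Q^-_{s_0}(\mathbf U^\star)$. *)

theory Defs
  imports "HOL-Probability.Probability"
begin

text \<open>Distribution function of the statistic S = G(U, theta), where U has law M
  (a probability measure on the space of u, not depending on theta):
  FS s theta = P_theta(S <= s).\<close>
definition FS :: "'u measure \<Rightarrow> ('u \<Rightarrow> real \<Rightarrow> real) \<Rightarrow> real \<Rightarrow> real \<Rightarrow> real" where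
  "FS M G s \<theta> = measure M {u \<in> space M. G u \<theta> \<le> s}"

definition Qset :: "real set \<Rightarrow> ('u \<Rightarrow> real \<Rightarrow> real) \<Rightarrow> real \<Rightarrow> 'u \<Rightarrow> real set" where
  "Qset \<Theta> G s u = {\<theta> \<in> \<Theta>. s = G u \<theta>}"

definition Qplus :: "real set \<Rightarrow> ('u \<Rightarrow> real \<Rightarrow> real) \<Rightarrow> real \<Rightarrow> 'u \<Rightarrow> real" where
  "Qplus \<Theta> G s u = Sup (Qset \<Theta> G s u)"

definition Qminus :: "real set \<Rightarrow> ('u \<Rightarrow> real \<Rightarrow> real) \<Rightarrow> real \<Rightarrow> 'u \<Rightarrow> real" where
  "Qminus \<Theta> G s u = Inf (Qset \<Theta> G s u)"

end

theory Submission imports Defs begin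

lemma left_from0:
  fixes f :: "real \<Rightarrow> real"
  assumes "((\<lambda>x. f (a - x)) \<longlongrightarrow> l) (at_right 0)"
  shows "(f \<longlongrightarrow> l) (at_left a)"
  using assms unfolding at_left_minus[of a] at_right_to_0[of "-a"] filterlim_filtermap
  by simp

lemma right_from0:
  fixes f :: "real \<Rightarrow> real"
  assumes "((\<lambda>x. f (a + x)) \<longlongrightarrow> l) (at_right 0)"
  shows "(f \<longlongrightarrow> l) (at_right a)"
  using assms unfolding at_right_to_0[of a] filterlim_filtermap
  by (simp add: add.commute)

lemma lim_union:
  fixes A :: "real \<Rightarrow> 'a set"
  assumes fm: "finite_measure M" and d: "\<delta> > 0"
    and meas: "\<And>e. 0 < e \<Longrightarrow> e < \<delta> \<Longrightarrow> A e \<in> sets M"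
    and anti: "\<And>e e'. 0 < e \<Longrightarrow> e \<le> e' \<Longrightarrow> e' < \<delta> \<Longrightarrow> A e' \<subseteq> A e"
  shows "(\<Union>e\<in>{0<..<\<delta>}. A e) \<in> sets M \<and>
     ((\<lambda>e. measure M (A e)) \<longlongrightarrow> measure M (\<Union>e\<in>{0<..<\<delta>}. A e)) (at_right 0)"
proof -
  interpret finite_measure M by (rule fm)
  define B where "B n = A (\<delta> / (real n + 2))" for n
  have pos: "0 < \<delta> / (real n + 2)" "\<delta> / (real n + 2) < \<delta>" for n
  proof -
    show "0 < \<delta> / (real n + 2)" using d by (intro divide_pos_pos) auto
    have "\<delta> * 1 < \<delta> * (real n + 2)" using d by (intro mult_strict_left_mono) auto
    then show "\<delta> / (real n + 2) < \<delta>" by (simp add: divide_less_eq)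
  qed
  have Bm: "range B \<subseteq> sets M" using meas pos unfolding B_def by auto
  have inc: "incseq B"
  proof (rule incseq_SucI)
    fix n
    have "\<delta> / (real (Suc n) + 2) \<le> \<delta> / (real n + 2)"
      using d by (intro divide_left_mono) auto
    then show "B n \<subseteq> B (Suc n)" unfolding B_def using anti pos by blast
  qed
  have U: "(\<Union>e\<in>{0<..<\<delta>}. A e) = (\<Union>n. B n)"
  proof
    show "(\<Union>e\<in>{0<..<\<delta>}. A e) \<subseteq> (\<Union>n. B n)"
    proof
      fix x assume "x \<in> (\<Union>e\<in>{0<..<\<delta>}. A e)"
      then obtain e where e: "0 < e" "e < \<delta>" "x \<in> A e" by auto
      obtain n :: nat where n: "\<delta> / e < real n" using reals_Archimedean2 by blast
      have "\<delta> / (real n + 2) \<le> e"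
        using n e by (auto simp: field_simps)
      then have "A e \<subseteq> B n" unfolding B_def using anti pos e by blast
      then show "x \<in> (\<Union>n. B n)" using e by auto
    qed
    show "(\<Union>n. B n) \<subseteq> (\<Union>e\<in>{0<..<\<delta>}. A e)"
      unfolding B_def using pos by fastforce
  qed
  have lim: "(\<lambda>n. measure M (B n)) \<longlonglongrightarrow> measure M (\<Union>n. B n)"
    by (rule finite_Lim_measure_incseq[OF Bm inc])
  have Us: "(\<Union>n. B n) \<in> sets M" using Bm by auto
  show ?thesis
  proof
    show "(\<Union>e\<in>{0<..<\<delta>}. A e) \<in> sets M" using U Us by simp
    show "((\<lambda>e. measure M (A e)) \<longlongrightarrow> measure M (\<Union>e\<in>{0<..<\<delta>}. A e)) (at_right 0)"
      unfolding U
    proof (rule order_tendstoI)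
      fix a assume a: "a < measure M (\<Union>n. B n)"
      from order_tendstoD(1)[OF lim a] obtain N where N: "a < measure M (B N)"
        by (auto simp: eventually_sequentially)
      show "\<forall>\<^sub>F e in at_right 0. a < measure M (A e)"
        unfolding eventually_at_right_field
      proof (intro exI[of _ "\<delta> / (real N + 2)"] conjI allI impI)
        show "0 < \<delta> / (real N + 2)" using pos by simp
        fix y :: real assume y: "0 < y" "y < \<delta> / (real N + 2)"
        then have "B N \<subseteq> A y" unfolding B_def using anti pos by (meson less_imp_le)
        then have "measure M (B N) \<le> measure M (A y)"
          using meas y pos(2)[of N] by (intro finite_measure_mono) auto
        then show "a < measure M (A y)" using N by simp
      qed
    next
      fix a assume a: "measure M (\<Union>n. B n) < a"
      show "\<forall>\<^sub>F e in at_right 0. measure M (A e) < a"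
        unfolding eventually_at_right_field
      proof (intro exI[of _ \<delta>] conjI allI impI)
        show "0 < \<delta>" by (rule d)
        fix y :: real assume y: "0 < y" "y < \<delta>"
        then have "A y \<subseteq> (\<Union>n. B n)" unfolding U[symmetric] by auto
        then have "measure M (A y) \<le> measure M (\<Union>n. B n)"
          using Us by (intro finite_measure_mono) auto
        then show "measure M (A y) < a" using a by simp
      qed
    qed
  qed
qed


locale fid = prob_space M for M :: "'u measure" +
  fixes G :: "'u \<Rightarrow> real \<Rightarrow> real" and \<Theta> :: "real set"
  assumes Theta_interval: "is_interval \<Theta>"
    and S_rv: "\<And>\<theta>. \<theta> \<in> \<Theta> \<Longrightarrow> (\<lambda>u. G u \<theta>) \<in> borel_measurable M"
    and A1: "\<And>u. u \<in> space M \<Longrightarrow> mono_on \<Theta> (G u)"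
    and A2: "\<And>u s. u \<in> space M \<Longrightarrow> Qset \<Theta> G s u \<noteq> {}"
begin

lemma surj: "u \<in> space M \<Longrightarrow> \<exists>\<theta>\<in>\<Theta>. G u \<theta> = s"
  using A2[of u s] unfolding Qset_def by auto

lemma mono: "u \<in> space M \<Longrightarrow> a \<in> \<Theta> \<Longrightarrow> b \<in> \<Theta> \<Longrightarrow> a \<le> b \<Longrightarrow> G u a \<le> G u b"
  using A1 by (meson mono_onD)

lemma intv: "a \<in> \<Theta> \<Longrightarrow> b \<in> \<Theta> \<Longrightarrow> a \<le> x \<Longrightarrow> x \<le> b \<Longrightarrow> x \<in> \<Theta>"
  using Theta_interval unfolding is_interval_1 by blast

lemma lt:
  assumes u: "u \<in> space M" and t: "\<theta>0 \<in> \<Theta>" and g: "G u \<theta>0 < s"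
  shows "\<exists>\<theta>\<in>\<Theta>. \<theta>0 < \<theta> \<and> G u \<theta> < s \<and> (\<forall>q\<in>\<Theta>. s \<le> G u q \<longrightarrow> \<theta> < q)"
proof -
  obtain \<theta> where th: "\<theta> \<in> \<Theta>" "G u \<theta> = (G u \<theta>0 + s) / 2" using surj[OF u] by blast
  have "\<theta>0 < \<theta>"
  proof (rule ccontr)
    assume "\<not> \<theta>0 < \<theta>"
    then have "G u \<theta> \<le> G u \<theta>0" using mono[OF u th(1) t] by simp
    then show False using th g by simp
  qed
  moreover have "\<forall>q\<in>\<Theta>. s \<le> G u q \<longrightarrow> \<theta> < q"
  proof (intro ballI impI, rule ccontr)
    fix q assume q: "q \<in> \<Theta>" "s \<le> G u q" "\<not> \<theta> < q"
    then have "G u q \<le> G u \<theta>" using mono[OF u q(1) th(1)] by simp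
    then show False using th g q by simp
  qed
  ultimately show ?thesis using th g by auto
qed

lemma gt:
  assumes u: "u \<in> space M" and t: "\<theta>0 \<in> \<Theta>" and g: "G u \<theta>0 > s"
  shows "\<exists>\<theta>\<in>\<Theta>. \<theta> < \<theta>0 \<and> G u \<theta> > s \<and> (\<forall>q\<in>\<Theta>. G u q \<le> s \<longrightarrow> q < \<theta>)"
proof -
  obtain \<theta> where th: "\<theta> \<in> \<Theta>" "G u \<theta> = (G u \<theta>0 + s) / 2" using surj[OF u] by blast
  have "\<theta> < \<theta>0"
  proof (rule ccontr)
    assume "\<not> \<theta> < \<theta>0"
    then have "G u \<theta>0 \<le> G u \<theta>" using mono[OF u t th(1)] by simp
    then show False using th g by simp
  qed
  moreover have "\<forall>q\<in>\<Theta>. G u q \<le> s \<longrightarrow> q < \<theta>"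
  proof (intro ballI impI, rule ccontr)
    fix q assume q: "q \<in> \<Theta>" "G u q \<le> s" "\<not> q < \<theta>"
    then have "G u \<theta> \<le> G u q" using mono[OF u th(1) q(1)] by simp
    then show False using th g q by simp
  qed
  ultimately show ?thesis using th g by auto
qed

lemma above: "\<theta>0 \<in> \<Theta> \<Longrightarrow> \<exists>\<theta>\<in>\<Theta>. \<theta>0 < \<theta>"
proof -
  assume t: "\<theta>0 \<in> \<Theta>"
  obtain u where u: "u \<in> space M" using not_empty by blast
  show ?thesis using lt[OF u t, of "G u \<theta>0 + 1"] by auto
qed

lemma below: "\<theta>0 \<in> \<Theta> \<Longrightarrow> \<exists>\<theta>\<in>\<Theta>. \<theta> < \<theta>0"
proof -
  assume t: "\<theta>0 \<in> \<Theta>"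
  obtain u where u: "u \<in> space M" using not_empty by blast
  show ?thesis using gt[OF u t, of "G u \<theta>0 - 1"] by auto
qed

lemma Q_ne: "u \<in> space M \<Longrightarrow> Qset \<Theta> G s u \<noteq> {}" by (rule A2)

lemma Q_bdd_above: assumes u: "u \<in> space M" shows "bdd_above (Qset \<Theta> G s u)"
proof -
  obtain \<theta> where th: "\<theta> \<in> \<Theta>" "G u \<theta> = s + 1" using surj[OF u] by blast
  have "\<forall>q\<in>Qset \<Theta> G s u. q \<le> \<theta>"
  proof (intro ballI, rule ccontr)
    fix q assume q: "q \<in> Qset \<Theta> G s u" "\<not> q \<le> \<theta>"
    then have "G u \<theta> \<le> G u q" using mono[OF u th(1), of q] unfolding Qset_def by auto
    then show False using q th unfolding Qset_def by auto
  qed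
  then show ?thesis unfolding bdd_above_def by blast
qed

lemma Q_bdd_below: assumes u: "u \<in> space M" shows "bdd_below (Qset \<Theta> G s u)"
proof -
  obtain \<theta> where th: "\<theta> \<in> \<Theta>" "G u \<theta> = s - 1" using surj[OF u] by blast
  have "\<forall>q\<in>Qset \<Theta> G s u. \<theta> \<le> q"
  proof (intro ballI, rule ccontr)
    fix q assume q: "q \<in> Qset \<Theta> G s u" "\<not> \<theta> \<le> q"
    then have "G u q \<le> G u \<theta>" using mono[OF u _ th(1), of q] unfolding Qset_def by auto
    then show False using q th unfolding Qset_def by auto
  qed
  then show ?thesis unfolding bdd_below_def by blast
qed

lemma Q_bounded: assumes u: "u \<in> space M" shows "bounded (Qset \<Theta> G s u)"
proof -
  obtain h where h: "\<forall>x\<in>Qset \<Theta> G s u. x \<le> h" using Q_bdd_above[OF u] unfolding bdd_above_def by blast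
  obtain l where l: "\<forall>x\<in>Qset \<Theta> G s u. l \<le> x" using Q_bdd_below[OF u] unfolding bdd_below_def by blast
  have "Qset \<Theta> G s u \<subseteq> {l..h}" using h l by auto
  then show ?thesis by (metis bounded_subset compact_Icc compact_imp_bounded)
qed

lemma Q_interval: assumes u: "u \<in> space M" shows "is_interval (Qset \<Theta> G s u)"
  unfolding is_interval_1
proof (intro ballI allI impI)
  fix a b x assume a: "a \<in> Qset \<Theta> G s u" and b: "b \<in> Qset \<Theta> G s u" and x: "a \<le> x \<and> x \<le> b"
  have xt: "x \<in> \<Theta>" using a b x intv unfolding Qset_def by auto
  have "G u a \<le> G u x" using mono[OF u _ xt, of a] a x unfolding Qset_def by auto
  moreover have "G u x \<le> G u b" using mono[OF u xt, of b] b x unfolding Qset_def by auto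
  ultimately show "x \<in> Qset \<Theta> G s u" using a b xt unfolding Qset_def by auto
qed

lemma Q_le: "u \<in> space M \<Longrightarrow> Qminus \<Theta> G s u \<le> Qplus \<Theta> G s u"
  unfolding Qminus_def Qplus_def using Q_ne Q_bdd_above Q_bdd_below by (intro cInf_le_cSup) auto

lemma Qplus_char:
  assumes u: "u \<in> space M"
  shows "Qplus \<Theta> G s u \<le> \<theta>0 \<longleftrightarrow> (\<forall>\<theta>\<in>\<Theta>. \<theta>0 < \<theta> \<longrightarrow> s < G u \<theta>)"
proof
  assume H: "\<forall>\<theta>\<in>\<Theta>. \<theta>0 < \<theta> \<longrightarrow> s < G u \<theta>"
  show "Qplus \<Theta> G s u \<le> \<theta>0" unfolding Qplus_def
  proof (rule cSup_least[OF Q_ne[OF u]])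
    fix x assume "x \<in> Qset \<Theta> G s u" then show "x \<le> \<theta>0" using H unfolding Qset_def by force
  qed
next
  assume L: "Qplus \<Theta> G s u \<le> \<theta>0"
  show "\<forall>\<theta>\<in>\<Theta>. \<theta>0 < \<theta> \<longrightarrow> s < G u \<theta>"
  proof (intro ballI impI, rule ccontr)
    fix \<theta> assume th: "\<theta> \<in> \<Theta>" "\<theta>0 < \<theta>" "\<not> s < G u \<theta>"
    show False
    proof (cases "G u \<theta> = s")
      case True
      then have "\<theta> \<in> Qset \<Theta> G s u" using th unfolding Qset_def by auto
      then have "\<theta> \<le> Qplus \<Theta> G s u" unfolding Qplus_def using Q_bdd_above[OF u] by (rule cSup_upper)
      then show False using L th by simp
    next
      case False
      then have "G u \<theta> < s" using th by simp
      from lt[OF u th(1) this] obtain \<theta>' where t': "\<theta>' \<in> \<Theta>" "\<theta> < \<theta>'"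
        "\<forall>q\<in>\<Theta>. s \<le> G u q \<longrightarrow> \<theta>' < q" by blast
      obtain q where q: "q \<in> Qset \<Theta> G s u" using Q_ne[OF u] by blast
      then have "\<theta>' < q" using t' unfolding Qset_def by auto
      moreover have "q \<le> Qplus \<Theta> G s u" unfolding Qplus_def using q Q_bdd_above[OF u] by (rule cSup_upper)
      ultimately show False using L th t' by simp
    qed
  qed
qed

lemma Qminus_char:
  assumes u: "u \<in> space M" and t: "\<theta>0 \<in> \<Theta>"
  shows "Qminus \<Theta> G s u \<le> \<theta>0 \<longleftrightarrow> s \<le> G u \<theta>0"
proof
  assume H: "s \<le> G u \<theta>0"
  show "Qminus \<Theta> G s u \<le> \<theta>0"
  proof (cases "G u \<theta>0 = s")
    case True
    then have "\<theta>0 \<in> Qset \<Theta> G s u" using t unfolding Qset_def by auto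
    then show ?thesis unfolding Qminus_def using Q_bdd_below[OF u] by (rule cInf_lower)
  next
    case False
    then have "G u \<theta>0 > s" using H by simp
    from gt[OF u t this] obtain \<theta>' where t': "\<theta>' \<in> \<Theta>" "\<theta>' < \<theta>0"
        "\<forall>q\<in>\<Theta>. G u q \<le> s \<longrightarrow> q < \<theta>'" by blast
    obtain q where q: "q \<in> Qset \<Theta> G s u" using Q_ne[OF u] by blast
    then have "q < \<theta>'" using t' unfolding Qset_def by auto
    have "Qminus \<Theta> G s u \<le> q" unfolding Qminus_def using q Q_bdd_below[OF u] by (rule cInf_lower)
    then show ?thesis using \<open>q < \<theta>'\<close> t' by simp
  qed
next
  assume L: "Qminus \<Theta> G s u \<le> \<theta>0"
  show "s \<le> G u \<theta>0"
  proof (rule ccontr)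
    assume "\<not> s \<le> G u \<theta>0"
    then have "G u \<theta>0 < s" by simp
    from lt[OF u t this] obtain \<theta>' where t': "\<theta>' \<in> \<Theta>" "\<theta>0 < \<theta>'"
        "\<forall>q\<in>\<Theta>. s \<le> G u q \<longrightarrow> \<theta>' < q" by blast
    have "\<theta>' \<le> Qminus \<Theta> G s u" unfolding Qminus_def
    proof (rule cInf_greatest[OF Q_ne[OF u]])
      fix x assume "x \<in> Qset \<Theta> G s u" then show "\<theta>' \<le> x" using t' unfolding Qset_def by force
    qed
    then show False using L t' by simp
  qed
qed

lemma m_le: "\<theta> \<in> \<Theta> \<Longrightarrow> {u \<in> space M. G u \<theta> \<le> s} \<in> sets M"
  using S_rv by measurable
lemma m_lt: "\<theta> \<in> \<Theta> \<Longrightarrow> {u \<in> space M. G u \<theta> < s} \<in> sets M"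
  using S_rv by measurable
lemma m_gt: "\<theta> \<in> \<Theta> \<Longrightarrow> {u \<in> space M. s < G u \<theta>} \<in> sets M"
  using S_rv by measurable
lemma m_eq: "\<theta> \<in> \<Theta> \<Longrightarrow> {u \<in> space M. G u \<theta> = s} \<in> sets M"
  using S_rv by measurable


lemma fm: "finite_measure M" by (rule finite_measure_axioms)

lemma right_lim:
  assumes t: "\<theta>0 \<in> \<Theta>"
  shows "\<exists>U\<in>sets M. ((\<lambda>e. FS M G s (\<theta>0 + e)) \<longlongrightarrow> measure M U) (at_right 0)
     \<and> {u\<in>space M. Qplus \<Theta> G s u \<le> \<theta>0} = space M - U
     \<and> {u\<in>space M. G u \<theta>0 < s} \<subseteq> U \<and> U \<subseteq> {u\<in>space M. G u \<theta>0 \<le> s}"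
proof -
  obtain \<theta>1 where t1: "\<theta>1 \<in> \<Theta>" "\<theta>0 < \<theta>1" using above[OF t] by blast
  define \<delta> where "\<delta> = \<theta>1 - \<theta>0"
  have d: "0 < \<delta>" using t1 by (simp add: \<delta>_def)
  define A where "A e = {u\<in>space M. G u (\<theta>0 + e) \<le> s}" for e
  have inT: "0 \<le> e \<Longrightarrow> e \<le> \<delta> \<Longrightarrow> \<theta>0 + e \<in> \<Theta>" for e
    using intv[OF t t1(1)] by (simp add: \<delta>_def)
  have meas: "0 < e \<Longrightarrow> e < \<delta> \<Longrightarrow> A e \<in> sets M" for e
    unfolding A_def using inT m_le by simp
  have anti: "0 < e \<Longrightarrow> e \<le> e' \<Longrightarrow> e' < \<delta> \<Longrightarrow> A e' \<subseteq> A e" for e e'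
  proof
    fix u assume h: "0 < e" "e \<le> e'" "e' < \<delta>" "u \<in> A e'"
    then have "G u (\<theta>0 + e) \<le> G u (\<theta>0 + e')" using mono[of u "\<theta>0 + e" "\<theta>0 + e'"] inT
      unfolding A_def by auto
    then show "u \<in> A e" using h unfolding A_def by auto
  qed
  define U where "U = (\<Union>e\<in>{0<..<\<delta>}. A e)"
  from lim_union[where A=A, OF fm d meas anti] have L: "U \<in> sets M"
    "((\<lambda>e. measure M (A e)) \<longlongrightarrow> measure M U) (at_right 0)" unfolding U_def by auto
  have FSA: "FS M G s (\<theta>0 + e) = measure M (A e)" for e unfolding FS_def A_def by simp
  have ex: "(\<exists>\<theta>\<in>\<Theta>. \<theta>0 < \<theta> \<and> G u \<theta> \<le> s) \<longleftrightarrow> u \<in> U" if u: "u \<in> space M" for u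
  proof
    assume "\<exists>\<theta>\<in>\<Theta>. \<theta>0 < \<theta> \<and> G u \<theta> \<le> s"
    then obtain \<theta> where th: "\<theta> \<in> \<Theta>" "\<theta>0 < \<theta>" "G u \<theta> \<le> s" by blast
    define e where "e = min (\<theta> - \<theta>0) (\<delta>/2)"
    have e: "0 < e" "e < \<delta>" "\<theta>0 + e \<le> \<theta>" using th d by (auto simp: e_def)
    have "G u (\<theta>0 + e) \<le> G u \<theta>" using mono[OF u _ th(1) e(3)] inT e by simp
    then show "u \<in> U" unfolding U_def A_def using e th u by (auto intro!: bexI[of _ e])
  next
    assume "u \<in> U"
    then obtain e where "0 < e" "e < \<delta>" "G u (\<theta>0 + e) \<le> s" unfolding U_def A_def by auto
    then show "\<exists>\<theta>\<in>\<Theta>. \<theta>0 < \<theta> \<and> G u \<theta> \<le> s" using inT by (intro bexI[of _ "\<theta>0 + e"]) auto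
  qed
  have USp: "U \<subseteq> space M" unfolding U_def A_def by auto
  have Q: "{u\<in>space M. Qplus \<Theta> G s u \<le> \<theta>0} = space M - U"
  proof -
    have "Qplus \<Theta> G s u \<le> \<theta>0 \<longleftrightarrow> u \<notin> U" if u: "u \<in> space M" for u
      using Qplus_char[OF u, of s \<theta>0] ex[OF u] by (auto simp: not_less)
    then show ?thesis by auto
  qed
  have lo: "{u\<in>space M. G u \<theta>0 < s} \<subseteq> U"
  proof
    fix u assume "u \<in> {u\<in>space M. G u \<theta>0 < s}"
    then have u: "u \<in> space M" "G u \<theta>0 < s" by auto
    from lt[OF u(1) t u(2)] obtain \<theta> where "\<theta> \<in> \<Theta>" "\<theta>0 < \<theta>" "G u \<theta> < s" by blast
    then show "u \<in> U" using ex[OF u(1)] by auto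
  qed
  have hi: "U \<subseteq> {u\<in>space M. G u \<theta>0 \<le> s}"
  proof
    fix u assume "u \<in> U"
    then obtain e where e: "0 < e" "e < \<delta>" "G u (\<theta>0 + e) \<le> s" "u \<in> space M" unfolding U_def A_def by auto
    have "G u \<theta>0 \<le> G u (\<theta>0 + e)" using mono[OF e(4) t inT] e by simp
    then show "u \<in> {u\<in>space M. G u \<theta>0 \<le> s}" using e by auto
  qed
  show ?thesis using L Q lo hi unfolding FSA by blast
qed

lemma left_lim_s:
  assumes t: "\<theta>0 \<in> \<Theta>"
  shows "((\<lambda>e. FS M G (s - e) \<theta>0) \<longlongrightarrow> measure M {u\<in>space M. G u \<theta>0 < s}) (at_right 0)"
proof -
  define A where "A e = {u\<in>space M. G u \<theta>0 \<le> s - e}" for e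
  have meas: "0 < e \<Longrightarrow> e < 1 \<Longrightarrow> A e \<in> sets M" for e
    unfolding A_def using t m_le by simp
  have anti: "0 < e \<Longrightarrow> e \<le> e' \<Longrightarrow> e' < 1 \<Longrightarrow> A e' \<subseteq> A e" for e e'
    unfolding A_def by auto
  have U: "(\<Union>e\<in>{0<..<1}. A e) = {u\<in>space M. G u \<theta>0 < s}"
  proof
    show "(\<Union>e\<in>{0<..<1}. A e) \<subseteq> {u\<in>space M. G u \<theta>0 < s}" unfolding A_def by force
    show "{u\<in>space M. G u \<theta>0 < s} \<subseteq> (\<Union>e\<in>{0<..<1::real}. A e)"
    proof
      fix u assume u: "u \<in> {u\<in>space M. G u \<theta>0 < s}"
      define e where "e = min ((s - G u \<theta>0)/2) (1/2)"
      have "e \<le> (s - G u \<theta>0)/2" "e \<le> 1/2" unfolding e_def by (rule min.cobounded1, rule min.cobounded2)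
      moreover have "0 < e" using u by (simp add: e_def)
      moreover have g: "G u \<theta>0 < s" using u by simp
      ultimately have "0 < e" "e < 1" "G u \<theta>0 \<le> s - e" by (auto simp: field_simps)
      then show "u \<in> (\<Union>e\<in>{0<..<1::real}. A e)" using u unfolding A_def by auto
    qed
  qed
  from lim_union[where A=A and \<delta>=1, OF fm zero_less_one meas anti]
  have "((\<lambda>e. measure M (A e)) \<longlongrightarrow> measure M (\<Union>e\<in>{0<..<1}. A e)) (at_right 0)" by blast
  then show ?thesis unfolding U by (simp add: FS_def A_def)
qed

lemma left_lim_theta:
  assumes t: "\<theta>0 \<in> \<Theta>"
  shows "((\<lambda>e. FS M G s (\<theta>0 - e)) \<longlongrightarrow> FS M G s \<theta>0) (at_right 0)"
proof -
  obtain \<theta>1 where t1: "\<theta>1 \<in> \<Theta>" "\<theta>1 < \<theta>0" using below[OF t] by blast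
  define \<delta> where "\<delta> = \<theta>0 - \<theta>1"
  have d: "0 < \<delta>" using t1 by (simp add: \<delta>_def)
  define A where "A e = {u\<in>space M. s < G u (\<theta>0 - e)}" for e
  have inT: "0 \<le> e \<Longrightarrow> e \<le> \<delta> \<Longrightarrow> \<theta>0 - e \<in> \<Theta>" for e
    using intv[OF t1(1) t] by (simp add: \<delta>_def)
  have meas: "0 < e \<Longrightarrow> e < \<delta> \<Longrightarrow> A e \<in> sets M" for e
    unfolding A_def using inT m_gt by simp
  have anti: "0 < e \<Longrightarrow> e \<le> e' \<Longrightarrow> e' < \<delta> \<Longrightarrow> A e' \<subseteq> A e" for e e'
  proof
    fix u assume h: "0 < e" "e \<le> e'" "e' < \<delta>" "u \<in> A e'"
    then have "G u (\<theta>0 - e') \<le> G u (\<theta>0 - e)" using mono[of u "\<theta>0 - e'" "\<theta>0 - e"] inT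
      unfolding A_def by auto
    then show "u \<in> A e" using h unfolding A_def by auto
  qed
  have U: "(\<Union>e\<in>{0<..<\<delta>}. A e) = {u\<in>space M. s < G u \<theta>0}"
  proof
    show "(\<Union>e\<in>{0<..<\<delta>}. A e) \<subseteq> {u\<in>space M. s < G u \<theta>0}"
    proof
      fix u assume "u \<in> (\<Union>e\<in>{0<..<\<delta>}. A e)"
      then obtain e where e: "0 < e" "e < \<delta>" "s < G u (\<theta>0 - e)" "u \<in> space M" unfolding A_def by auto
      have "G u (\<theta>0 - e) \<le> G u \<theta>0" using mono[OF e(4) inT t] e by simp
      then show "u \<in> {u\<in>space M. s < G u \<theta>0}" using e by auto
    qed
    show "{u\<in>space M. s < G u \<theta>0} \<subseteq> (\<Union>e\<in>{0<..<\<delta>}. A e)"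
    proof
      fix u assume "u \<in> {u\<in>space M. s < G u \<theta>0}"
      then have u: "u \<in> space M" "s < G u \<theta>0" by auto
      from gt[OF u(1) t u(2)] obtain \<theta> where th: "\<theta> \<in> \<Theta>" "\<theta> < \<theta>0" "s < G u \<theta>" by blast
      define e where "e = min (\<theta>0 - \<theta>) (\<delta>/2)"
      have e: "0 < e" "e < \<delta>" "\<theta> \<le> \<theta>0 - e" using th d by (auto simp: e_def)
      have "G u \<theta> \<le> G u (\<theta>0 - e)" using mono[OF u(1) th(1) _ e(3)] inT e by simp
      then show "u \<in> (\<Union>e\<in>{0<..<\<delta>}. A e)" unfolding A_def using e th u by (auto intro!: bexI[of _ e])
    qed
  qed
  from lim_union[where A=A, OF fm d meas anti] have L:
    "((\<lambda>e. measure M (A e)) \<longlongrightarrow> measure M {u\<in>space M. s < G u \<theta>0}) (at_right 0)"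
    unfolding U by simp
  have cmp: "FS M G s \<theta> = 1 - measure M {u\<in>space M. s < G u \<theta>}" if "\<theta> \<in> \<Theta>" for \<theta>
  proof -
    have "{u\<in>space M. G u \<theta> \<le> s} = space M - {u\<in>space M. s < G u \<theta>}" by auto
    then show ?thesis unfolding FS_def using prob_compl[OF m_gt[OF that]] by simp
  qed
  have ev: "\<forall>\<^sub>F e in at_right 0. 1 - measure M (A e) = FS M G s (\<theta>0 - e)"
    unfolding eventually_at_right_field
    by (rule exI[of _ \<delta>]) (use d inT cmp in \<open>auto simp: A_def\<close>)
  have "((\<lambda>e. 1 - measure M (A e)) \<longlongrightarrow> 1 - measure M {u\<in>space M. s < G u \<theta>0}) (at_right 0)"
    by (intro tendsto_intros L)
  then have "((\<lambda>e. FS M G s (\<theta>0 - e)) \<longlongrightarrow> 1 - measure M {u\<in>space M. s < G u \<theta>0}) (at_right 0)"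
    using ev by (rule Lim_transform_eventually)
  then show ?thesis using cmp[OF t] by simp
qed


lemma U_meas:
  assumes t: "\<theta>0 \<in> \<Theta>" and null: "measure M {u\<in>space M. G u \<theta>0 = s} = 0"
    and U: "U \<in> sets M" "{u\<in>space M. G u \<theta>0 < s} \<subseteq> U" "U \<subseteq> {u\<in>space M. G u \<theta>0 \<le> s}"
  shows "measure M U = FS M G s \<theta>0"
proof -
  have m1: "measure M {u\<in>space M. G u \<theta>0 < s} \<le> measure M U"
    using U by (intro finite_measure_mono) auto
  have m2: "measure M U \<le> measure M {u\<in>space M. G u \<theta>0 \<le> s}"
    using U m_le[OF t] by (intro finite_measure_mono) auto
  have "{u\<in>space M. G u \<theta>0 \<le> s} = {u\<in>space M. G u \<theta>0 < s} \<union> {u\<in>space M. G u \<theta>0 = s}" by auto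
  then have "measure M {u\<in>space M. G u \<theta>0 \<le> s} = measure M {u\<in>space M. G u \<theta>0 < s} + measure M {u\<in>space M. G u \<theta>0 = s}"
    using finite_measure_Union[OF m_lt[OF t, of s] m_eq[OF t, of s]] by auto
  then show ?thesis using m1 m2 null unfolding FS_def by simp
qed

lemma AE_eq:
  assumes null: "\<forall>\<theta>0\<in>\<Theta>. \<forall>s0. measure M {u \<in> space M. G u \<theta>0 = s0} = 0"
  shows "AE u in M. Qplus \<Theta> G s u = Qminus \<Theta> G s u"
proof (rule AE_I')
  let ?N = "\<Union>r\<in>\<Theta> \<inter> \<rat>. {u\<in>space M. G u r = s}"
  show "?N \<in> null_sets M"
  proof (rule null_sets_UN')
    show "countable (\<Theta> \<inter> \<rat>)" using countable_rat by (rule countable_subset[rotated]) auto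
    fix r assume r: "r \<in> \<Theta> \<inter> \<rat>"
    show "{u\<in>space M. G u r = s} \<in> null_sets M"
      using r m_eq[of r s] null unfolding null_sets_def by (simp add: emeasure_eq_measure)
  qed
  show "{u\<in>space M. \<not> Qplus \<Theta> G s u = Qminus \<Theta> G s u} \<subseteq> ?N"
  proof
    fix u assume "u \<in> {u\<in>space M. \<not> Qplus \<Theta> G s u = Qminus \<Theta> G s u}"
    then have u: "u \<in> space M" and ne: "Qplus \<Theta> G s u \<noteq> Qminus \<Theta> G s u" by auto
    then have "Qminus \<Theta> G s u < Qplus \<Theta> G s u" using Q_le[OF u, of s] by simp
    from Rats_dense_in_real[OF this] obtain r where r: "r \<in> \<rat>"
      "Qminus \<Theta> G s u < r" "r < Qplus \<Theta> G s u" by blast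
    from r(2) obtain q1 where q1: "q1 \<in> Qset \<Theta> G s u" "q1 < r"
      using cInf_less_iff[OF Q_ne[OF u] Q_bdd_below[OF u]] unfolding Qminus_def by blast
    from r(3) obtain q2 where q2: "q2 \<in> Qset \<Theta> G s u" "r < q2"
      using less_cSup_iff[OF Q_ne[OF u] Q_bdd_above[OF u]] unfolding Qplus_def by blast
    have "r \<in> Qset \<Theta> G s u" using Q_interval[OF u, of s] q1 q2 unfolding is_interval_1
      by (meson less_imp_le)
    then show "u \<in> ?N" using r u unfolding Qset_def by auto
  qed
qed

end

theorem theorem1:
  fixes M :: "'u measure" and G :: "'u \<Rightarrow> real \<Rightarrow> real" and \<Theta> :: "real set"
  assumes prob: "prob_space M"
    and Theta_interval: "is_interval \<Theta>"
    and S_rv: "\<And>\<theta>. \<theta> \<in> \<Theta> \<Longrightarrow> (\<lambda>u. G u \<theta>) \<in> borel_measurable M"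
    and A1: "\<And>u. u \<in> space M \<Longrightarrow> mono_on \<Theta> (G u)"
    and A2: "\<And>u s. u \<in> space M \<Longrightarrow> Qset \<Theta> G s u \<noteq> {}"
  shows
    "(\<forall>u\<in>space M. \<forall>s. is_interval (Qset \<Theta> G s u) \<and> bounded (Qset \<Theta> G s u)
        \<and> Qminus \<Theta> G s u \<le> Qplus \<Theta> G s u)
     \<and> (\<forall>s0. \<forall>\<theta>0\<in>\<Theta>.
          ((\<lambda>\<epsilon>. FS M G s0 (\<theta>0 + \<epsilon>)) \<longlongrightarrow>
              1 - measure M {u \<in> space M. Qplus \<Theta> G s0 u \<le> \<theta>0}) (at_right 0)
        \<and> ((\<lambda>\<epsilon>. FS M G (s0 - \<epsilon>) \<theta>0) \<longlongrightarrow>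
              1 - measure M {u \<in> space M. Qminus \<Theta> G s0 u \<le> \<theta>0}) (at_right 0))
     \<and> ((\<forall>\<theta>0\<in>\<Theta>. \<forall>s0. measure M {u \<in> space M. G u \<theta>0 = s0} = 0) \<longrightarrow>
          (\<forall>s. continuous_on \<Theta> (\<lambda>\<theta>. FS M G s \<theta>))
          \<and> (\<forall>s0. AE u in M. Qplus \<Theta> G s0 u = Qminus \<Theta> G s0 u)
          \<and> (\<forall>s0. \<forall>\<theta>0\<in>\<Theta>.
               measure M {u \<in> space M. Qplus \<Theta> G s0 u \<le> \<theta>0} = 1 - FS M G s0 \<theta>0))"
proof -
  interpret F: fid M G \<Theta>
    unfolding fid_def fid_axioms_def using prob Theta_interval S_rv A1 A2 by blast
  have P1: "\<forall>u\<in>space M. \<forall>s. is_interval (Qset \<Theta> G s u) \<and> bounded (Qset \<Theta> G s u)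
        \<and> Qminus \<Theta> G s u \<le> Qplus \<Theta> G s u"
    using F.Q_interval F.Q_bounded F.Q_le by blast
  have P2: "\<forall>s0. \<forall>\<theta>0\<in>\<Theta>.
          ((\<lambda>\<epsilon>. FS M G s0 (\<theta>0 + \<epsilon>)) \<longlongrightarrow>
              1 - measure M {u \<in> space M. Qplus \<Theta> G s0 u \<le> \<theta>0}) (at_right 0)
        \<and> ((\<lambda>\<epsilon>. FS M G (s0 - \<epsilon>) \<theta>0) \<longlongrightarrow>
              1 - measure M {u \<in> space M. Qminus \<Theta> G s0 u \<le> \<theta>0}) (at_right 0)"
  proof (intro allI ballI conjI)
    fix s0 \<theta>0 assume t: "\<theta>0 \<in> \<Theta>"
    from F.right_lim[OF t, of s0] obtain U where U: "U \<in> sets M"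
      "((\<lambda>e. FS M G s0 (\<theta>0 + e)) \<longlongrightarrow> measure M U) (at_right 0)"
      "{u\<in>space M. Qplus \<Theta> G s0 u \<le> \<theta>0} = space M - U" by blast
    have "1 - measure M {u \<in> space M. Qplus \<Theta> G s0 u \<le> \<theta>0} = measure M U"
      using U(3) F.prob_compl[OF U(1)] by simp
    then show "((\<lambda>\<epsilon>. FS M G s0 (\<theta>0 + \<epsilon>)) \<longlongrightarrow>
              1 - measure M {u \<in> space M. Qplus \<Theta> G s0 u \<le> \<theta>0}) (at_right 0)"
      using U(2) by simp
    have "{u \<in> space M. Qminus \<Theta> G s0 u \<le> \<theta>0} = space M - {u\<in>space M. G u \<theta>0 < s0}"
      using F.Qminus_char[OF _ t] by (auto simp: not_less)
    then have "1 - measure M {u \<in> space M. Qminus \<Theta> G s0 u \<le> \<theta>0} = measure M {u\<in>space M. G u \<theta>0 < s0}"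
      using F.prob_compl[OF F.m_lt[OF t]] by simp
    then show "((\<lambda>\<epsilon>. FS M G (s0 - \<epsilon>) \<theta>0) \<longlongrightarrow>
              1 - measure M {u \<in> space M. Qminus \<Theta> G s0 u \<le> \<theta>0}) (at_right 0)"
      using F.left_lim_s[OF t, of s0] by simp
  qed
  have P3: "(\<forall>\<theta>0\<in>\<Theta>. \<forall>s0. measure M {u \<in> space M. G u \<theta>0 = s0} = 0) \<longrightarrow>
          (\<forall>s. continuous_on \<Theta> (\<lambda>\<theta>. FS M G s \<theta>))
          \<and> (\<forall>s0. AE u in M. Qplus \<Theta> G s0 u = Qminus \<Theta> G s0 u)
          \<and> (\<forall>s0. \<forall>\<theta>0\<in>\<Theta>.
               measure M {u \<in> space M. Qplus \<Theta> G s0 u \<le> \<theta>0} = 1 - FS M G s0 \<theta>0)"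
  proof (intro impI conjI allI)
    assume null: "\<forall>\<theta>0\<in>\<Theta>. \<forall>s0. measure M {u \<in> space M. G u \<theta>0 = s0} = 0"
    fix s
    show "AE u in M. Qplus \<Theta> G s u = Qminus \<Theta> G s u" by (rule F.AE_eq[OF null])
    show "continuous_on \<Theta> (\<lambda>\<theta>. FS M G s \<theta>)"
    proof (rule continuous_at_imp_continuous_on, intro ballI)
      fix \<theta>0 assume t: "\<theta>0 \<in> \<Theta>"
      from F.right_lim[OF t, of s] obtain U where U: "U \<in> sets M"
        "((\<lambda>e. FS M G s (\<theta>0 + e)) \<longlongrightarrow> measure M U) (at_right 0)"
        "{u\<in>space M. G u \<theta>0 < s} \<subseteq> U" "U \<subseteq> {u\<in>space M. G u \<theta>0 \<le> s}" by blast
      have "measure M U = FS M G s \<theta>0" using F.U_meas[OF t _ U(1) U(3) U(4)] null t by blast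
      then have R: "((\<lambda>\<theta>. FS M G s \<theta>) \<longlongrightarrow> FS M G s \<theta>0) (at_right \<theta>0)"
        using right_from0[of "\<lambda>\<theta>. FS M G s \<theta>" \<theta>0] U(2) by simp
      have L: "((\<lambda>\<theta>. FS M G s \<theta>) \<longlongrightarrow> FS M G s \<theta>0) (at_left \<theta>0)"
        using left_from0[of "\<lambda>\<theta>. FS M G s \<theta>" \<theta>0] F.left_lim_theta[OF t, of s] by simp
      show "isCont (\<lambda>\<theta>. FS M G s \<theta>) \<theta>0"
        unfolding continuous_at filterlim_at_split using L R by simp
    qed
  next
    assume null: "\<forall>\<theta>0\<in>\<Theta>. \<forall>s0. measure M {u \<in> space M. G u \<theta>0 = s0} = 0"
    fix s0 show "\<forall>\<theta>0\<in>\<Theta>. measure M {u \<in> space M. Qplus \<Theta> G s0 u \<le> \<theta>0} = 1 - FS M G s0 \<theta>0"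
    proof
      fix \<theta>0 assume t: "\<theta>0 \<in> \<Theta>"
      from F.right_lim[OF t, of s0] obtain U where U: "U \<in> sets M"
        "{u\<in>space M. Qplus \<Theta> G s0 u \<le> \<theta>0} = space M - U"
        "{u\<in>space M. G u \<theta>0 < s0} \<subseteq> U" "U \<subseteq> {u\<in>space M. G u \<theta>0 \<le> s0}" by blast
      have "measure M U = FS M G s0 \<theta>0" using F.U_meas[OF t _ U(1) U(3) U(4)] null t by blast
      then show "measure M {u \<in> space M. Qplus \<Theta> G s0 u \<le> \<theta>0} = 1 - FS M G s0 \<theta>0"
        using U(2) F.prob_compl[OF U(1)] by simp
    qed
  qed
  show ?thesis using P1 P2 P3 by blast
qed

end
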